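(* Let $L\ge1$ be an integer and $g$ a real polynomial of degree at most $L$ with $g(0)=g'(0)=0$. Let $a<0<b$, $\gamma\ge 1$ and $0\le\delta\le\min\{-a/4,\,b/4\}$, and suppose $|g(x)|\le \gamma|x|+\delta$ for all $x\in[a,b]$. Then every $x\in[a,b]$ with $g(x)\ge(\gamma-1)|x|+\delta$ satisfies \[ |x|\ge \sqrt{\delta\cdot\frac{b-a}{32L^2}}\quad\text{if } \delta<\frac{b-a}{32L^2}, \qquad\text{and}\qquad |x|\ge \sqrt{\delta\cdot\frac{\sqrt{|ab|}}{16L}}\quad\text{if } \delta<\frac{\sqrt{|ab|}}{16L}. \] *)

theory Defs
  imports "HOL-Analysis.Analysis" "HOL-Computational_Algebra.Polynomial"
begin

end

theory Submission
  imports Defs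
begin

lemma cos_cis_eq: "complex_of_real (cos x) = (cis x + cis (-x)) / 2"
  by (simp add: complex_eq_iff)

lemma cis_cos_eq: "cis x * complex_of_real (cos x) = (1 + cis x ^ 2) / 2"
  by (simp add: complex_eq_iff power2_eq_square algebra_simps cos_squared_eq)

lemma poly_sum_upto:
  fixes p :: "real poly"
  assumes "degree p \<le> n"
  shows "poly p x = (\<Sum>i\<le>n. coeff p i * x ^ i)"
proof -
  have "poly p x = (\<Sum>i\<le>degree p. coeff p i * x ^ i)" by (simp only: poly_altdef)
  also have "\<dots> = (\<Sum>i\<le>n. coeff p i * x ^ i)"
    by (rule sum.mono_neutral_left) (use assms in \<open>auto simp: coeff_eq_0\<close>)
  finally show ?thesis .
qed

definition Pc :: "real poly \<Rightarrow> nat \<Rightarrow> complex poly" where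
  "Pc p n = (\<Sum>j\<le>n. smult (complex_of_real (coeff p j)) (monom 1 (n - j) * [:1/2, 0, 1/2:] ^ j))"

lemma Pc_eval:
  assumes "degree p \<le> n"
  shows "poly (Pc p n) (cis t) = cis (real n * t) * complex_of_real (poly p (cos t))"
proof -
  have "poly (Pc p n) (cis t) = (\<Sum>j\<le>n. complex_of_real (coeff p j) * (cis t ^ (n - j) * ((1 + cis t ^ 2)/2) ^ j))"
    unfolding Pc_def by (simp add: poly_sum poly_monom algebra_simps power2_eq_square add_divide_distrib)
  also have "\<dots> = (\<Sum>j\<le>n. cis t ^ n * complex_of_real (coeff p j * cos t ^ j))"
  proof (rule sum.cong[OF refl])
    fix j assume "j \<in> {..n}"
    then have "cis t ^ n = cis t ^ (n - j) * cis t ^ j" by (simp flip: power_add)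
    then show "complex_of_real (coeff p j) * (cis t ^ (n - j) * ((1 + cis t ^ 2)/2) ^ j)
        = cis t ^ n * complex_of_real (coeff p j * cos t ^ j)"
      by (simp flip: cis_cos_eq add: power_mult_distrib)
  qed
  also have "\<dots> = cis t ^ n * complex_of_real (\<Sum>j\<le>n. coeff p j * cos t ^ j)"
    by (simp add: sum_distrib_left)
  also have "\<dots> = cis (real n * t) * complex_of_real (poly p (cos t))"
    by (simp add: Complex.DeMoivre poly_sum_upto[OF assms])
  finally show ?thesis .
qed

lemma degree_Pc: "degree (Pc p n) \<le> 2 * n"
  unfolding Pc_def
proof (rule degree_sum_le)
  show "finite {..n}" by simp
next
  fix j assume j: "j \<in> {..n}"
  have "degree (smult (complex_of_real (coeff p j)) (monom 1 (n - j) * [:1/2, 0, 1/2:] ^ j))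
     \<le> degree (monom (1::complex) (n - j) * [:1/2, 0, 1/2:] ^ j)" by (rule degree_smult_le)
  also have "\<dots> \<le> degree (monom (1::complex) (n - j)) + degree ([:1/2, 0, 1/2:] ^ j :: complex poly)"
    by (rule degree_mult_le)
  also have "\<dots> \<le> (n - j) + 2 * j"
    using degree_power_le[of "[:1/2, 0, 1/2:] :: complex poly" j]
    by (simp add: degree_monom_eq)
  also have "\<dots> \<le> 2 * n" using j by auto
  finally show "degree (smult (complex_of_real (coeff p j)) (monom 1 (n - j) * [:1/2, 0, 1/2:] ^ j)) \<le> 2 * n" .
qed

definition Ps :: "real \<Rightarrow> nat \<Rightarrow> complex poly" where
  "Ps b n = [:cis (-b) / 2:] + monom (cis b / 2) (2 * n)"

lemma Ps_eval: "poly (Ps b n) (cis t) = cis (real n * t) * complex_of_real (cos (real n * t + b))"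
proof -
  have "poly (Ps b n) (cis t) = cis (-b)/2 + cis b / 2 * cis (real (2*n) * t)"
    using Complex.DeMoivre[of t "2*n"] by (simp add: Ps_def poly_monom)
  also have "\<dots> = cis (real n * t) * complex_of_real (cos (real n * t + b))"
    by (simp add: cos_cis_eq cis_mult algebra_simps add_divide_distrib)
  finally show ?thesis .
qed

lemma degree_Ps: "degree (Ps b n) \<le> 2 * n"
  unfolding Ps_def by (rule order.trans[OF degree_add_le]) (auto simp: degree_monom_le)

lemma cis_inj_interval:
  assumes "c < u" "u < c + 2*pi" "c < v" "v < c + 2*pi" "cis u = cis v"
  shows "u = v"
proof -
  have "cis (u - v) = 1" using assms(5) by (simp flip: cis_divide)
  then have "Re (cis (u - v)) = 1" by simp
  then have "cos (u - v) = 1" by simp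
  then obtain k :: int where k: "u - v = k * 2 * pi" by (auto simp: cos_one_2pi_int)
  have "\<bar>u - v\<bar> < 2 * pi" using assms(1-4) by auto
  then have "\<bar>real_of_int k\<bar> * (2*pi) < 1 * (2 * pi)" using k by (simp add: abs_mult)
  then have "\<bar>real_of_int k\<bar> < 1" by (rule mult_right_less_imp_less) simp
  then have "k = 0" by linarith
  then show ?thesis using k by simp
qed

lemma sign_change_zero:
  fixes f :: "real \<Rightarrow> real"
  assumes "a < b" "continuous_on {a..b} f" "f a * f b < 0"
  shows "\<exists>x. a < x \<and> x < b \<and> f x = 0"
proof (cases "f a < 0")
  case True
  then have fb: "f b > 0" using assms(3) by (simp add: mult_less_0_iff)
  obtain x where x: "a \<le> x" "x \<le> b" "f x = 0" using IVT'[of f a 0 b] True fb assms(1,2) by auto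
  have "x \<noteq> a" "x \<noteq> b" using x True fb by auto
  then have "a < x" "x < b" using x by auto
  then show ?thesis using x(3) by blast
next
  case False
  then have fa: "f a > 0" and fb: "f b < 0" using assms(3) by (auto simp: mult_less_0_iff)
  obtain x where x: "a \<le> x" "x \<le> b" "f x = 0" using IVT2'[of f b 0 a] fa fb assms(1,2) by auto
  have "x \<noteq> a" "x \<noteq> b" using x fa fb by auto
  then have "a < x" "x < b" using x by auto
  then show ?thesis using x(3) by blast
qed

lemma T_deriv:
  "((\<lambda>t. poly p (cos t)) has_real_derivative (- poly (pderiv p) (cos t) * sin t)) (at t)"
proof -
  have "((\<lambda>t. poly p (cos t)) has_real_derivative poly (pderiv p) (cos t) * (- sin t)) (at t)"
    by (rule DERIV_chain2[OF poly_DERIV DERIV_cos])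
  then show ?thesis by simp
qed

lemma bern_core:
  fixes p :: "real poly" and n :: nat and \<theta>0 :: real
  assumes n: "n \<ge> 1" and deg: "degree p \<le> n"
    and bnd: "\<And>t. \<bar>poly p (cos t)\<bar> < 1"
    and der: "- poly (pderiv p) (cos \<theta>0) * sin \<theta>0 < - real n"
  shows False
proof -
  define T where "T = (\<lambda>t. poly p (cos t))"
  have Tb: "\<And>t. \<bar>T t\<bar> < 1" using bnd by (simp add: T_def)
  define c where "c = T \<theta>0"
  have c: "-1 < c" "c < 1" using Tb[of \<theta>0] by (auto simp: c_def)
  define \<alpha> where "\<alpha> = arccos c"
  have \<alpha>: "0 < \<alpha>" "\<alpha> < pi" using arccos_lt_bounded[OF c] by (auto simp: \<alpha>_def)
  have cos\<alpha>: "cos \<alpha> = c" using c by (simp add: \<alpha>_def)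
  have sin\<alpha>: "sin \<alpha> \<le> 1" by simp
  have nr: "real n > 0" using n by simp
  define \<beta> where "\<beta> = \<alpha> - real n * \<theta>0"
  define S where "S = (\<lambda>t. cos (real n * t + \<beta>))"
  define D where "D = (\<lambda>t. S t - T t)"
  define th where "th = (\<lambda>k::nat. \<theta>0 + (real k * pi - \<alpha>) / real n)"
  have S_th: "S (th k) = (-1) ^ k" for k
  proof -
    have "real n * th k + \<beta> = real k * pi" using nr by (simp add: th_def \<beta>_def field_simps)
    then show ?thesis by (simp add: S_def)
  qed
  have D_th: "D (th k) = (-1) ^ k - T (th k)" for k by (simp add: D_def S_th)
  have D_sign: "D (th k) * D (th (Suc k)) < 0" for k
  proof (cases "even k")
    case True
    then have "D (th k) > 0" "D (th (Suc k)) < 0" using Tb[of "th k"] Tb[of "th (Suc k)"]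
      by (auto simp: D_th abs_less_iff)
    then show ?thesis by (simp add: mult_pos_neg)
  next
    case False
    then have "D (th k) < 0" "D (th (Suc k)) > 0" using Tb[of "th k"] Tb[of "th (Suc k)"]
      by (auto simp: D_th abs_less_iff)
    then show ?thesis by (simp add: mult_neg_pos)
  qed
  have th_le: "i \<le> j \<Longrightarrow> th i \<le> th j" for i j
    using nr by (simp add: th_def divide_right_mono mult_right_mono)
  have th_lt: "th k < th (Suc k)" for k
    using nr by (simp add: th_def divide_strict_right_mono algebra_simps)
  have contD: "continuous_on A D" for A
    unfolding D_def S_def T_def by (intro continuous_intros)
  have "\<forall>k\<in>{1..<2*n}. \<exists>z. th k < z \<and> z < th (Suc k) \<and> D z = 0"
    using sign_change_zero[OF th_lt contD D_sign] by blast
  then obtain z where z: "\<And>k. k \<in> {1..<2*n} \<Longrightarrow> th k < z k \<and> z k < th (Suc k) \<and> D (z k) = 0"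
    by metis
  have th0: "th 0 < \<theta>0" using \<alpha> nr by (simp add: th_def)
  have th1: "\<theta>0 < th 1" using \<alpha> nr by (simp add: th_def)
  have th2n: "th (2*n) = th 0 + 2 * pi" using nr by (simp add: th_def field_simps)
  have D0: "D \<theta>0 = 0" by (simp add: D_def S_def \<beta>_def cos\<alpha> c_def)
  have Dder: "(D has_real_derivative (- sin \<alpha> * real n - (- poly (pderiv p) (cos \<theta>0) * sin \<theta>0))) (at \<theta>0)"
  proof -
    have "(S has_real_derivative (- sin (real n * \<theta>0 + \<beta>) * real n)) (at \<theta>0)"
      unfolding S_def by (auto intro!: derivative_eq_intros)
    then have "(S has_real_derivative (- sin \<alpha> * real n)) (at \<theta>0)" by (simp add: \<beta>_def)
    then show ?thesis unfolding D_def T_def by (intro DERIV_diff T_deriv)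
  qed
  have dpos: "- sin \<alpha> * real n - (- poly (pderiv p) (cos \<theta>0) * sin \<theta>0) > 0"
  proof -
    have "sin \<alpha> * real n \<le> real n" using sin\<alpha> nr by simp
    then show ?thesis using der by linarith
  qed
  obtain d where d: "d > 0" "\<And>h. h > 0 \<Longrightarrow> h < d \<Longrightarrow> D \<theta>0 < D (\<theta>0 + h)"
    using DERIV_pos_inc_right[OF Dder dpos] by blast
  define h where "h = min (d/2) ((th 1 - \<theta>0)/2)"
  have h12: "h > 0" "h < d" using d th1 by (auto simp: h_def)
  have "h \<le> (th 1 - \<theta>0)/2" unfolding h_def by (rule min.cobounded2)
  then have h3: "\<theta>0 + h < th 1" using th1 by (simp add: field_simps)
  note h = h12 h3
  define e where "e = \<theta>0 + h"
  have e: "\<theta>0 < e" "e < th 1" "D e > 0" using d(2)[OF h(1,2)] h D0 by (auto simp: e_def)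
  have Dth1: "D (th 1) < 0" using Tb[of "th 1"] by (simp add: D_th)
  have "D e * D (th 1) < 0" using e Dth1 by (simp add: mult_pos_neg)
  then obtain w where w: "e < w" "w < th 1" "D w = 0"
    using sign_change_zero[OF e(2) contD] by blast
  define \<zeta> where "\<zeta> = (\<lambda>k. if k = 0 then \<theta>0 else if k = 1 then w else z (k - 1))"
  have zk: "\<And>k. 2 \<le> k \<Longrightarrow> k \<le> 2*n \<Longrightarrow> th (k-1) < \<zeta> k \<and> \<zeta> k < th k \<and> D (\<zeta> k) = 0"
  proof -
    fix k :: nat assume k: "2 \<le> k" "k \<le> 2*n"
    then have "k - 1 \<in> {1..<2*n}" by auto
    from z[OF this] k show "th (k-1) < \<zeta> k \<and> \<zeta> k < th k \<and> D (\<zeta> k) = 0"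
      by (simp add: \<zeta>_def)
  qed
  have \<zeta>_props: "th 0 < \<zeta> k \<and> \<zeta> k < th 0 + 2 * pi \<and> D (\<zeta> k) = 0" if k: "k \<le> 2*n" for k
  proof -
    have T1: "th 1 \<le> th (2*n)" using th_le n by simp
    consider "k = 0" | "k = 1" | "2 \<le> k" by linarith
    then show ?thesis
    proof cases
      case 1 then show ?thesis using th0 th1 T1 th2n D0 by (simp add: \<zeta>_def)
    next
      case 2 then show ?thesis using th0 th1 T1 th2n w e by (simp add: \<zeta>_def)
    next
      case 3
      then have "th 0 \<le> th (k-1)" "th k \<le> th (2*n)" using th_le k by auto
      then show ?thesis using zk[OF 3 k] th2n by auto
    qed
  qed
  have \<zeta>_mono: "\<zeta> i < \<zeta> j" if ij: "i < j" "j \<le> 2*n" for i j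
  proof -
    have A0: "2 \<le> j \<Longrightarrow> th 1 \<le> th (j - 1)" using th_le by simp
    consider "i = 0" "j = 1" | "i = 0" "2 \<le> j" | "i = 1" | "2 \<le> i" using ij by linarith
    then show ?thesis
    proof cases
      case 1 then show ?thesis using e w by (simp add: \<zeta>_def)
    next
      case 2 then show ?thesis using zk[OF 2(2) ij(2)] A0[OF 2(2)] th1 by (simp add: \<zeta>_def)
    next
      case 3
      then have j2: "2 \<le> j" using ij by simp
      show ?thesis using zk[OF j2 ij(2)] A0[OF j2] w 3 by (simp add: \<zeta>_def)
    next
      case 4
      then have "th i \<le> th (j - 1)" using ij th_le by simp
      then show ?thesis using zk[OF 4] zk[of j] ij 4 by force
    qed
  qed
  define Q where "Q = Ps \<beta> n - Pc p n"
  have Qeval: "poly Q (cis t) = cis (real n * t) * complex_of_real (D t)" for t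
    by (simp add: Q_def Ps_eval Pc_eval[OF deg] D_def S_def T_def algebra_simps)
  have "D (th 0) \<noteq> 0" using D_th[of 0] Tb[of "th 0"] by auto
  then have "poly Q (cis (th 0)) \<noteq> 0" by (simp add: Qeval)
  then have Qnz: "Q \<noteq> 0" by auto
  have degQ: "degree Q \<le> 2*n"
    unfolding Q_def using degree_diff_le[OF degree_Ps degree_Pc] by simp
  define Z where "Z = (\<lambda>k. cis (\<zeta> k)) ` {0..2*n}"
  have Zsub: "Z \<subseteq> {x. poly Q x = 0}"
    using \<zeta>_props by (auto simp: Z_def Qeval)
  have inj: "inj_on (\<lambda>k. cis (\<zeta> k)) {0..2*n}"
  proof (rule inj_onI)
    fix i j assume ij: "i \<in> {0..2*n}" "j \<in> {0..2*n}" "cis (\<zeta> i) = cis (\<zeta> j)"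
    then have "\<zeta> i = \<zeta> j" using cis_inj_interval[of "th 0"] \<zeta>_props by auto
    then show "i = j" using \<zeta>_mono ij by (metis atLeastAtMost_iff linorder_neqE_nat order_less_irrefl)
  qed
  have "card Z = 2*n + 1" unfolding Z_def using card_image[OF inj] by simp
  moreover have "card Z \<le> card {x. poly Q x = 0}"
    by (rule card_mono[OF poly_roots_finite[OF Qnz] Zsub])
  moreover have "card {x. poly Q x = 0} \<le> degree Q" by (rule card_poly_roots_bound[OF Qnz])
  ultimately show False using degQ by linarith
qed

lemma bern_strict:
  fixes p :: "real poly"
  assumes n: "n \<ge> 1" and deg: "degree p \<le> n" and bnd: "\<forall>t\<in>{-1..1}. \<bar>poly p t\<bar> < 1"
  shows "\<bar>poly (pderiv p) (cos \<theta>) * sin \<theta>\<bar> \<le> real n"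
proof (rule ccontr)
  assume "\<not> ?thesis"
  then have h: "\<bar>poly (pderiv p) (cos \<theta>) * sin \<theta>\<bar> > real n" by simp
  have b: "\<And>t. \<bar>poly p (cos t)\<bar> < 1" using bnd by auto
  show False
  proof (cases "poly (pderiv p) (cos \<theta>) * sin \<theta> > 0")
    case True
    then show False using bern_core[OF n deg b, of \<theta>] h by simp
  next
    case False
    then show False using bern_core[OF n deg b, of "-\<theta>"] h by simp
  qed
qed

lemma bern_M:
  fixes p :: "real poly"
  assumes deg: "degree p \<le> n" and bnd: "\<forall>t\<in>{-1..1}. \<bar>poly p t\<bar> \<le> M"
  shows "\<bar>poly (pderiv p) (cos \<theta>) * sin \<theta>\<bar> \<le> real n * M"
proof -
  have M0: "M \<ge> 0" using bnd by (metis abs_ge_zero atLeastAtMost_iff neg_le_0_iff_le order_trans zero_le_one)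
  show ?thesis
  proof (cases "n = 0")
    case True
    then have "pderiv p = 0" using deg by (simp add: pderiv_eq_0_iff)
    then show ?thesis using True by simp
  next
    case False
    then have n: "n \<ge> 1" by simp
    have key: "\<bar>poly (pderiv p) (cos \<theta>) * sin \<theta>\<bar> \<le> real n * M + real n * e" if e: "e > 0" for e
    proof -
      define p' where "p' = smult (1/(M+e)) p"
      have Me: "M + e > 0" using M0 e by simp
      have deg': "degree p' \<le> n" using deg by (simp add: p'_def)
      have b': "\<forall>t\<in>{-1..1}. \<bar>poly p' t\<bar> < 1"
      proof
        fix t :: real assume "t \<in> {-1..1}"
        then have "\<bar>poly p t\<bar> \<le> M" using bnd by blast
        then have "\<bar>poly p t\<bar> < M + e" using e by linarith
        then show "\<bar>poly p' t\<bar> < 1" using Me by (simp add: p'_def abs_mult)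
      qed
      have "\<bar>poly (pderiv p') (cos \<theta>) * sin \<theta>\<bar> \<le> real n" by (rule bern_strict[OF n deg' b'])
      then have "\<bar>poly (pderiv p) (cos \<theta>) * sin \<theta>\<bar> / (M + e) \<le> real n"
        using Me by (simp add: p'_def pderiv_smult abs_mult)
      then have "\<bar>poly (pderiv p) (cos \<theta>) * sin \<theta>\<bar> \<le> real n * (M + e)"
        using Me by (simp add: divide_le_eq)
      then show ?thesis by (simp add: algebra_simps)
    qed
    show ?thesis
    proof (rule field_le_epsilon)
      fix e :: real assume e: "e > 0"
      have "real n > 0" using n by simp
      then show "\<bar>poly (pderiv p) (cos \<theta>) * sin \<theta>\<bar> \<le> real n * M + e"
        using key[of "e / real n"] e by simp
    qed
  qed
qed

lemma sin_lower:
  fixes h :: real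
  assumes "0 \<le> h" "h \<le> 1/2"
  shows "7/8 * h \<le> sin h"
proof -
  have s1: "sin (h/2) \<le> h/2" using sin_x_le_x[of "h/2"] assms by simp
  have "h/2 \<le> pi" using assms pi_ge_two by linarith
  then have s0: "0 \<le> sin (h/2)" using assms by (intro sin_ge_zero) auto
  have "sin (h/2) ^ 2 \<le> (h/2)^2" using s0 s1 by (simp add: power_mono)
  also have "\<dots> \<le> (1/4)^2" by (rule power_mono) (use assms in auto)
  also have "\<dots> = 1/16" by (simp add: power2_eq_square)
  finally have "sin (h/2) ^ 2 \<le> 1/16" .
  moreover have "cos h = 1 - 2 * sin (h/2) ^ 2" using cos_double_sin[of "h/2"] by simp
  ultimately have c: "cos h \<ge> 7/8" by linarith
  have "h * cos h \<le> sin h"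
  proof (cases "h = 0")
    case True then show ?thesis by simp
  next
    case False
    then have hp: "0 < h" using assms by simp
    define f where "f = (\<lambda>x::real. sin x - x * cos x)"
    have d: "\<And>x. DERIV f x :> x * sin x"
      unfolding f_def by (auto intro!: derivative_eq_intros simp: algebra_simps)
    obtain z where z: "0 < z" "z < h" "f h - f 0 = (h - 0) * (z * sin z)"
      using MVT2[OF hp d] by blast
    have "z \<le> pi" using z assms pi_ge_two by linarith
    then have "sin z \<ge> 0" using z by (intro sin_ge_zero) auto
    then have "f h - f 0 \<ge> 0" using z hp by simp
    then show ?thesis by (simp add: f_def)
  qed
  moreover have "h * (7/8) \<le> h * cos h" using c assms by (intro mult_left_mono) auto
  then have "7/8 * h \<le> h * cos h" by (simp add: mult.commute)
  ultimately show ?thesis by linarith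
qed

lemma deriv_lipschitz:
  fixes f :: "real \<Rightarrow> real"
  assumes d: "\<And>x. (f has_real_derivative f' x) (at x)" and B: "\<And>x. \<bar>f' x\<bar> \<le> B"
  shows "\<bar>f u - f v\<bar> \<le> B * \<bar>u - v\<bar>"
proof -
  have *: "\<bar>f b - f a\<bar> \<le> B * \<bar>b - a\<bar>" if ab: "a < b" for a b
  proof -
    obtain z where z: "f b - f a = (b - a) * f' z" using MVT2[OF ab d] by blast
    have "\<bar>f b - f a\<bar> = \<bar>b - a\<bar> * \<bar>f' z\<bar>" by (simp add: z abs_mult)
    also have "\<dots> \<le> \<bar>b - a\<bar> * B" by (rule mult_left_mono[OF B]) simp
    finally show ?thesis by (simp add: mult.commute)
  qed
  consider "u < v" | "u = v" | "v < u" by linarith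
  then show ?thesis
  proof cases
    case 1 then show ?thesis using *[OF 1] by (simp add: abs_minus_commute)
  next
    case 2 then show ?thesis by simp
  next
    case 3 then show ?thesis using *[OF 3] by simp
  qed
qed

lemma sin_ge_sin_h:
  assumes "0 \<le> h" "h \<le> pi/2" "h \<le> \<phi>" "\<phi> \<le> pi - h"
  shows "sin h \<le> sin \<phi>"
proof (cases "\<phi> \<le> pi/2")
  case True
  then show ?thesis using assms by (subst sin_mono_le_eq) auto
next
  case False
  have "sin h \<le> sin (pi - \<phi>)" using assms False by (subst sin_mono_le_eq) auto
  then show ?thesis by simp
qed

lemma markov1:
  fixes p :: "real poly"
  assumes n: "n \<ge> 1" and deg: "degree p \<le> n" and bnd: "\<forall>t\<in>{-1..1}. \<bar>poly p t\<bar> \<le> M"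
  shows "\<forall>t\<in>{-1..1}. \<bar>poly (pderiv p) t\<bar> \<le> 32/7 * real n ^ 2 * M"
proof -
  define q where "q = pderiv p"
  have degq: "degree q \<le> n" using deg by (simp add: q_def degree_pderiv)
  have "continuous_on {-1..1::real} (\<lambda>t. \<bar>poly q t\<bar>)" by (intro continuous_intros)
  then obtain ts where ts: "ts \<in> {-1..1}" and tsmax: "\<forall>y\<in>{-1..1}. \<bar>poly q y\<bar> \<le> \<bar>poly q ts\<bar>"
    using continuous_attains_sup[of "{-1..1::real}" "\<lambda>t. \<bar>poly q t\<bar>"] by auto
  define Q where "Q = \<bar>poly q ts\<bar>"
  have bq: "\<forall>t\<in>{-1..1}. \<bar>poly q t\<bar> \<le> Q" using tsmax by (simp add: Q_def)
  have bernq: "\<And>\<theta>. \<bar>poly (pderiv q) (cos \<theta>) * sin \<theta>\<bar> \<le> real n * Q"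
    by (rule bern_M[OF degq bq])
  have bernp: "\<And>\<theta>. \<bar>poly q (cos \<theta>) * sin \<theta>\<bar> \<le> real n * M"
    unfolding q_def by (rule bern_M[OF deg bnd])
  define \<phi>s where "\<phi>s = arccos ts"
  have \<phi>s: "cos \<phi>s = ts" "0 \<le> \<phi>s" "\<phi>s \<le> pi" using ts by (auto simp: \<phi>s_def arccos_lbound arccos_ubound)
  have nr: "real n \<ge> 1" using n by simp
  define h where "h = 1 / (2 * real n)"
  have h: "0 < h" "h \<le> 1/2" using nr by (auto simp: h_def field_simps)
  have hn: "real n * h = 1/2" using nr by (simp add: h_def)
  define \<phi> where "\<phi> = (if \<phi>s \<le> pi/2 then \<phi>s + h else \<phi>s - h)"
  have dist: "\<bar>\<phi>s - \<phi>\<bar> = h" using h by (simp add: \<phi>_def)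
  have hpi: "h \<le> pi/4" using h pi_ge_two by linarith
  have \<phi>rng: "h \<le> \<phi>" "\<phi> \<le> pi - h" using \<phi>s hpi h by (auto simp: \<phi>_def)
  have sphi: "sin h \<le> sin \<phi>" by (rule sin_ge_sin_h) (use h hpi \<phi>rng in auto)
  have sh: "7/8 * h \<le> sin h" using sin_lower h by simp
  have sp: "7/8 * h \<le> sin \<phi>" using sphi sh by linarith
  have hpos': "7/8 * h > 0" using h by simp
  have lip: "\<bar>poly q (cos \<phi>s) - poly q (cos \<phi>)\<bar> \<le> (real n * Q) * \<bar>\<phi>s - \<phi>\<bar>"
    by (rule deriv_lipschitz[OF T_deriv]) (use bernq in \<open>simp add: abs_mult\<close>)
  have eQ: "real n * Q * \<bar>\<phi>s - \<phi>\<bar> = Q/2"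
  proof -
    have "real n * Q * \<bar>\<phi>s - \<phi>\<bar> = (real n * h) * Q" using dist by (simp add: algebra_simps)
    then show ?thesis using hn by simp
  qed
  have lip2: "\<bar>poly q ts - poly q (cos \<phi>)\<bar> \<le> Q/2" using lip eQ \<phi>s(1) by simp
  have lip': "Q \<le> \<bar>poly q (cos \<phi>)\<bar> + Q / 2"
    using abs_triangle_ineq[of "poly q (cos \<phi>)" "poly q ts - poly q (cos \<phi>)"] lip2
    by (simp add: Q_def)
  have "\<bar>poly q (cos \<phi>)\<bar> * sin \<phi> \<le> real n * M"
    using bernp[of \<phi>] sp hpos' by (simp add: abs_mult)
  moreover have "\<bar>poly q (cos \<phi>)\<bar> * (7/8 * h) \<le> \<bar>poly q (cos \<phi>)\<bar> * sin \<phi>"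
    by (rule mult_left_mono[OF sp]) simp
  ultimately have "\<bar>poly q (cos \<phi>)\<bar> * (7/8 * h) \<le> real n * M" by linarith
  then have "\<bar>poly q (cos \<phi>)\<bar> \<le> real n * M / (7/8 * h)" using hpos' by (simp add: le_divide_eq)
  also have "real n * M / (7/8 * h) = 16/7 * real n ^ 2 * M" using nr by (simp add: h_def power2_eq_square field_simps)
  finally have "Q \<le> 32/7 * real n ^ 2 * M" using lip' by linarith
  then show ?thesis using bq by (auto simp: q_def)
qed

lemma ab_bounds:
  fixes r :: "real poly"
  assumes ab: "a < b" and n: "n \<ge> 1" and deg: "degree r \<le> n"
    and bnd: "\<forall>y\<in>{a..b}. \<bar>poly r y\<bar> \<le> M"
  shows "\<forall>y\<in>{a..b}. \<bar>poly (pderiv r) y\<bar> \<le> 64/7 * real n ^ 2 * M / (b - a)"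
    and "\<forall>y\<in>{a..b}. \<bar>poly (pderiv r) y\<bar> * sqrt ((y - a) * (b - y)) \<le> real n * M"
proof -
  define m where "m = (a + b) / 2"
  define k where "k = (b - a) / 2"
  have k: "k > 0" using ab by (simp add: k_def)
  define p where "p = pcompose r [:m, k:]"
  have pev: "\<And>t. poly p t = poly r (m + k * t)" by (simp add: p_def poly_pcompose mult.commute)
  have dl: "pderiv [:m, k:] = [:k:]" by (simp add: pderiv_pCons)
  have pdev: "\<And>t. poly (pderiv p) t = poly (pderiv r) (m + k * t) * k"
    by (simp add: p_def pderiv_pcompose dl poly_pcompose mult.commute)
  have degp: "degree p \<le> n" using deg k by (simp add: p_def degree_pcompose)
  have bp: "\<forall>t\<in>{-1..1}. \<bar>poly p t\<bar> \<le> M"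
  proof
    fix t :: real assume t: "t \<in> {-1..1}"
    have "k * t \<le> k * 1" using t k by (intro mult_left_mono) auto
    moreover have "k * (-1) \<le> k * t" using t k by (intro mult_left_mono) auto
    ultimately have "k * t \<le> k" "- k \<le> k * t" by auto
    then have "m + k * t \<in> {a..b}" by (auto simp: m_def k_def field_simps)
    then show "\<bar>poly p t\<bar> \<le> M" using bnd by (simp add: pev)
  qed
  have tin: "(y - m) / k \<in> {-1..1}" if y: "y \<in> {a..b}" for y
    using y k by (auto simp: m_def k_def field_simps)
  have yk: "m + k * ((y - m) / k) = y" for y using k by simp
  show "\<forall>y\<in>{a..b}. \<bar>poly (pderiv r) y\<bar> \<le> 64/7 * real n ^ 2 * M / (b - a)"
  proof
    fix y assume y: "y \<in> {a..b}"
    have "\<bar>poly (pderiv p) ((y - m)/k)\<bar> \<le> 32/7 * real n ^ 2 * M"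
      using markov1[OF n degp bp] tin[OF y] by blast
    then have "\<bar>poly (pderiv r) y\<bar> * k \<le> 32/7 * real n ^ 2 * M"
      using k by (simp add: pdev yk abs_mult)
    then have "\<bar>poly (pderiv r) y\<bar> \<le> 32/7 * real n ^ 2 * M / k" using k by (simp add: le_divide_eq)
    then show "\<bar>poly (pderiv r) y\<bar> \<le> 64/7 * real n ^ 2 * M / (b - a)" by (simp add: k_def)
  qed
  show "\<forall>y\<in>{a..b}. \<bar>poly (pderiv r) y\<bar> * sqrt ((y - a) * (b - y)) \<le> real n * M"
  proof
    fix y assume y: "y \<in> {a..b}"
    define t where "t = (y - m) / k"
    have t: "-1 \<le> t" "t \<le> 1" using tin[OF y] by (auto simp: t_def)
    have "\<bar>poly (pderiv p) (cos (arccos t)) * sin (arccos t)\<bar> \<le> real n * M"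
      by (rule bern_M[OF degp bp])
    moreover have ct: "poly (pderiv p) t = poly (pderiv r) y * k" using pdev yk by (simp add: t_def)
    moreover have "t^2 \<le> 1" using t by (simp add: abs_square_le_1)
    then have sq: "\<bar>sqrt (1 - t^2)\<bar> = sqrt (1 - t^2)" by simp
    ultimately have "\<bar>poly (pderiv r) y\<bar> * (k * sqrt (1 - t^2)) \<le> real n * M"
      using t k by (simp add: sin_arccos abs_mult mult.assoc sq)
    moreover have "k * sqrt (1 - t^2) = sqrt ((y - a) * (b - y))"
    proof -
      have "k * sqrt (1 - t^2) = sqrt (k^2 * (1 - t^2))" using k by (simp add: real_sqrt_mult)
      also have "k^2 * (1 - t^2) = (y - a) * (b - y)"
      proof -
        have kt: "k * t = y - m" using k by (simp add: t_def)
        have am: "a = m - k" "b = m + k" by (simp_all add: m_def k_def field_simps)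
        have "k^2 * (1 - t^2) = k^2 - (k*t)^2" by (simp add: power_mult_distrib algebra_simps)
        also have "\<dots> = k^2 - (y - m)^2" by (simp add: kt)
        also have "\<dots> = (y - a) * (b - y)" unfolding am by (simp add: power2_eq_square algebra_simps)
        finally show ?thesis .
      qed
      finally show ?thesis .
    qed
    ultimately show "\<bar>poly (pderiv r) y\<bar> * sqrt ((y - a) * (b - y)) \<le> real n * M" by simp
  qed
qed

lemma core:
  fixes r :: "real poly"
  assumes a: "a < 0" and b: "0 < b" and K0: "K0 > 0" and dpos: "\<delta> > 0" and dsmall: "\<delta> < 1 / (16 * K0)"
    and gam: "\<gamma> \<ge> 1" and r0: "poly r 0 = 0"
    and rb: "\<forall>y\<in>{a..b}. \<bar>y * poly r y\<bar> \<le> \<gamma> * \<bar>y\<bar> + \<delta>"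
    and x: "x \<in> {a..b}" and gx: "x * poly r x \<ge> (\<gamma> - 1) * \<bar>x\<bar> + \<delta>"
    and dB: "\<And>M. \<forall>y\<in>{a..b}. \<bar>poly r y\<bar> \<le> M \<Longrightarrow>
               \<forall>y\<in>{a..b}. \<bar>y\<bar> \<le> 7 / (32 * K0) \<longrightarrow> \<bar>poly (pderiv r) y\<bar> \<le> 32/7 * K0 * M"
  shows "sqrt (\<delta> / (16 * K0)) \<le> \<bar>x\<bar>"
proof -
  define K where "K = 32/7 * K0"
  have K: "K > 0" using K0 by (simp add: K_def)
  have iK: "7 / (32 * K0) = 1 / K" by (simp add: K_def)
  have cont: "continuous_on {a..b} (\<lambda>t. \<bar>poly r t\<bar>)" by (intro continuous_intros)
  obtain y0 where y0: "y0 \<in> {a..b}" and y0max: "\<forall>y\<in>{a..b}. \<bar>poly r y\<bar> \<le> \<bar>poly r y0\<bar>"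
    using continuous_attains_sup[OF compact_Icc _ cont] a b by auto
  define M where "M = \<bar>poly r y0\<bar>"
  have bM: "\<forall>y\<in>{a..b}. \<bar>poly r y\<bar> \<le> M" using y0max by (simp add: M_def)
  have M0: "M \<ge> 0" by (simp add: M_def)
  have dB': "\<And>y. y \<in> {a..b} \<Longrightarrow> \<bar>y\<bar> \<le> 1 / K \<Longrightarrow> \<bar>poly (pderiv r) y\<bar> \<le> K * M"
  proof -
    have KM: "32/7 * K0 * M = K * M" by (simp add: K_def)
    fix y assume "y \<in> {a..b}" "\<bar>y\<bar> \<le> 1 / K"
    then show "\<bar>poly (pderiv r) y\<bar> \<le> K * M" using dB[OF bM] unfolding iK KM by blast
  qed
  have lin: "\<bar>poly r y\<bar> \<le> K * M * \<bar>y\<bar>" if y: "y \<in> {a..b}" "\<bar>y\<bar> \<le> 1 / K" for y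
  proof -
    consider "y = 0" | "0 < y" | "y < 0" by linarith
    then show ?thesis
    proof cases
      case 1 then show ?thesis using r0 by simp
    next
      case 2
      obtain z where z: "0 < z" "z < y" "poly r y - poly r 0 = (y - 0) * poly (pderiv r) z"
        using poly_MVT[OF 2] by blast
      have "z \<in> {a..b}" "\<bar>z\<bar> \<le> 1 / K" using z y a by auto
      then have "\<bar>poly (pderiv r) z\<bar> \<le> K * M" by (rule dB')
      then have "\<bar>y\<bar> * \<bar>poly (pderiv r) z\<bar> \<le> \<bar>y\<bar> * (K * M)" by (rule mult_left_mono) simp
      then show ?thesis using z r0 by (simp add: abs_mult mult.commute)
    next
      case 3
      obtain z where z: "y < z" "z < 0" "poly r 0 - poly r y = (0 - y) * poly (pderiv r) z"
        using poly_MVT[OF 3] by blast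
      have "z \<in> {a..b}" "\<bar>z\<bar> \<le> 1 / K" using z y b by auto
      then have "\<bar>poly (pderiv r) z\<bar> \<le> K * M" by (rule dB')
      then have "\<bar>y\<bar> * \<bar>poly (pderiv r) z\<bar> \<le> \<bar>y\<bar> * (K * M)" by (rule mult_left_mono) simp
      moreover have "poly r y = y * poly (pderiv r) z" using z r0 by simp
      ultimately show ?thesis by (simp add: abs_mult mult.commute)
    qed
  qed
  have Mb: "M \<le> \<gamma> + K * \<delta>"
  proof (cases "\<bar>y0\<bar> \<ge> 1 / K")
    case True
    have "1 / K > 0" using K by simp
    then have y0p: "\<bar>y0\<bar> > 0" using True by linarith
    have "\<bar>y0\<bar> * M \<le> \<gamma> * \<bar>y0\<bar> + \<delta>" using rb y0 by (simp add: M_def abs_mult)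
    then have "M \<le> \<gamma> + \<delta> / \<bar>y0\<bar>" using y0p by (simp add: field_simps)
    moreover have "\<delta> / \<bar>y0\<bar> \<le> K * \<delta>"
    proof -
      have "1 \<le> K * \<bar>y0\<bar>" using True K by (simp add: field_simps)
      then have "\<delta> * 1 \<le> \<delta> * (K * \<bar>y0\<bar>)" using dpos by (intro mult_left_mono) auto
      then have "\<delta> \<le> K * \<delta> * \<bar>y0\<bar>" by (simp add: algebra_simps)
      then show ?thesis using y0p by (simp add: divide_le_eq)
    qed
    ultimately show ?thesis by linarith
  next
    case False
    then have "M \<le> K * M * \<bar>y0\<bar>" using lin[OF y0] by (simp add: M_def)
    moreover have "K * \<bar>y0\<bar> < 1" using False K by (simp add: field_simps)
    ultimately have "M \<le> 0"
    proof -
      assume A: "M \<le> K * M * \<bar>y0\<bar>" and B: "K * \<bar>y0\<bar> < 1"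
      show "M \<le> 0"
      proof (rule ccontr)
        assume "\<not> M \<le> 0"
        then have Mp: "M > 0" by simp
        have "M * (K * \<bar>y0\<bar>) < M * 1" using B Mp by (intro mult_strict_left_mono) auto
        then show False using A by (simp add: algebra_simps)
      qed
    qed
    moreover have "K * \<delta> > 0" using K dpos by simp
    ultimately show ?thesis using gam by linarith
  qed
  show ?thesis
  proof (rule ccontr)
    assume "\<not> ?thesis"
    then have xs: "\<bar>x\<bar> < sqrt (\<delta> / (16 * K0))" by simp
    have "\<bar>x\<bar>^2 < (sqrt (\<delta> / (16 * K0)))^2" by (rule power_strict_mono[OF xs]) auto
    then have x2: "x^2 < \<delta> / (16 * K0)" using dpos K0 by simp
    have xnz: "x \<noteq> 0" using gx dpos gam by (cases "x = 0") auto
    then have xp: "\<bar>x\<bar> > 0" by simp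
    have "\<delta> / (16 * K0) < (1 / (16 * K0))^2"
    proof -
      have "\<delta> / (16 * K0) < (1 / (16 * K0)) / (16 * K0)" by (rule divide_strict_right_mono) (use dsmall K0 in auto)
      then show ?thesis by (simp add: power2_eq_square)
    qed
    then have "\<bar>x\<bar>^2 < (1 / (16 * K0))^2" using x2 by simp
    then have xs2: "\<bar>x\<bar> < 1 / (16 * K0)" by (rule power_less_imp_less_base) (use K0 in simp)
    have "1 / (16 * K0) \<le> 1 / K" using K0 by (simp add: K_def field_simps)
    then have "\<bar>x\<bar> \<le> 1 / K" using xs2 by linarith
    then have rx: "\<bar>poly r x\<bar> \<le> K * M * \<bar>x\<bar>" using lin x by blast
    have gle: "x * poly r x \<le> M * (K * x^2)"
    proof -
      have "x * poly r x \<le> \<bar>x\<bar> * \<bar>poly r x\<bar>" by (simp add: abs_mult[symmetric])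
      also have "\<dots> \<le> \<bar>x\<bar> * (K * M * \<bar>x\<bar>)" by (rule mult_left_mono[OF rx]) simp
      also have "\<dots> = M * (K * x^2)" by (simp add: power2_eq_square algebra_simps)
      finally show ?thesis .
    qed
    have u: "K * x^2 \<le> 2/7 * \<delta>"
    proof -
      have "K * x^2 \<le> K * (\<delta> / (16 * K0))" using x2 K by (intro mult_left_mono) auto
      also have "\<dots> = 2/7 * \<delta>" using K0 by (simp add: K_def)
      finally show ?thesis .
    qed
    have v: "K * \<bar>x\<bar> \<le> 2/7"
    proof -
      have "K * \<bar>x\<bar> \<le> K * (1 / (16 * K0))" using xs2 K by (intro mult_left_mono) auto
      also have "\<dots> = 2/7" using K0 by (simp add: K_def)
      finally show ?thesis .
    qed
    have Kd: "K * \<delta> \<le> 2/7"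
    proof -
      have "K * \<delta> \<le> K * (1 / (16 * K0))" using dsmall K by (intro mult_left_mono) auto
      also have "\<dots> = 2/7" using K0 by (simp add: K_def)
      finally show ?thesis .
    qed
    have M2: "M \<le> \<gamma> + 2/7" using Mb Kd by linarith
    show False
    proof (cases "\<gamma> \<le> 2")
      case True
      have "M * (K * x^2) \<le> (16/7) * (2/7 * \<delta>)"
        by (rule mult_mono) (use M2 True u M0 K in auto)
      then have "x * poly r x \<le> 32/49 * \<delta>" using gle by simp
      moreover have "(\<gamma> - 1) * \<bar>x\<bar> \<ge> 0" using gam by simp
      ultimately show False using gx dpos by linarith
    next
      case False
      have "M * (K * x^2) = (M * (K * \<bar>x\<bar>)) * \<bar>x\<bar>" by (simp add: power2_eq_square algebra_simps)
      also have "\<dots> \<le> ((\<gamma> + 2/7) * (2/7)) * \<bar>x\<bar>"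
        by (intro mult_right_mono mult_mono) (use M2 v M0 K in auto)
      also have "\<dots> < (\<gamma> - 1) * \<bar>x\<bar>" using False xp by (intro mult_strict_right_mono) auto
      finally show False using gle gx dpos by linarith
    qed
  qed
qed

theorem lemma3p10:
  fixes g :: "real poly" and L :: nat and a b \<gamma> \<delta> x :: real
  assumes "L \<ge> 1"
    and "degree g \<le> L"
    and "poly g 0 = 0" and "poly (pderiv g) 0 = 0"
    and "a < 0" and "0 < b"
    and "\<gamma> \<ge> 1"
    and "0 \<le> \<delta>" and "\<delta> \<le> min (- a / 4) (b / 4)"
    and "\<forall>y\<in>{a..b}. \<bar>poly g y\<bar> \<le> \<gamma> * \<bar>y\<bar> + \<delta>"
    and "x \<in> {a..b}"
    and "poly g x \<ge> (\<gamma> - 1) * \<bar>x\<bar> + \<delta>"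
  shows "(\<delta> < (b - a) / (32 * real L ^ 2) \<longrightarrow>
            \<bar>x\<bar> \<ge> sqrt (\<delta> * ((b - a) / (32 * real L ^ 2))))
       \<and> (\<delta> < sqrt \<bar>a * b\<bar> / (16 * real L) \<longrightarrow>
            \<bar>x\<bar> \<ge> sqrt (\<delta> * (sqrt \<bar>a * b\<bar> / (16 * real L))))"
proof (cases "\<delta> = 0")
  case True
  then show ?thesis by simp
next
  case False
  then have dpos: "\<delta> > 0" using assms(8) by simp
  note L1 = assms(1) and a = assms(5) and b = assms(6) and gam = assms(7)
  have ab: "a < b" using a b by simp
  have Lr: "real L \<ge> 1" using L1 by simp
  have "[:-0, 1:] dvd g" using assms(3) by (simp only: poly_eq_0_iff_dvd)
  then obtain r where g: "g = [:0, 1:] * r" by (auto elim: dvdE)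
  have gy: "\<And>y. poly g y = y * poly r y" by (simp add: g)
  have r0: "poly r 0 = 0" using assms(4) by (simp add: g pderiv_mult pderiv_pCons)
  have rnz: "r \<noteq> 0"
  proof
    assume "r = 0"
    then have "poly g x = 0" by (simp add: g)
    moreover have "(\<gamma> - 1) * \<bar>x\<bar> \<ge> 0" using gam by simp
    ultimately show False using assms(12) dpos by linarith
  qed
  have "degree g = degree r + 1" using rnz by (simp add: g degree_mult_eq)
  then have degr: "degree r \<le> L" using assms(2) by simp
  have rb: "\<forall>y\<in>{a..b}. \<bar>y * poly r y\<bar> \<le> \<gamma> * \<bar>y\<bar> + \<delta>" using assms(10) by (simp add: gy)
  have gx: "x * poly r x \<ge> (\<gamma> - 1) * \<bar>x\<bar> + \<delta>" using assms(12) by (simp add: gy)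
  have conj1: "\<bar>x\<bar> \<ge> sqrt (\<delta> * ((b - a) / (32 * real L ^ 2)))"
    if d1: "\<delta> < (b - a) / (32 * real L ^ 2)"
  proof -
    define K0 where "K0 = 2 * real L ^ 2 / (b - a)"
    have K0: "K0 > 0" using ab Lr by (simp add: K0_def)
    have iK0: "1 / (16 * K0) = (b - a) / (32 * real L ^ 2)" using ab Lr by (simp add: K0_def)
    have dB: "\<forall>y\<in>{a..b}. \<bar>y\<bar> \<le> 7 / (32 * K0) \<longrightarrow> \<bar>poly (pderiv r) y\<bar> \<le> 32/7 * K0 * M"
      if bM: "\<forall>y\<in>{a..b}. \<bar>poly r y\<bar> \<le> M" for M
    proof -
      have mk: "\<forall>y\<in>{a..b}. \<bar>poly (pderiv r) y\<bar> \<le> 64/7 * real L ^ 2 * M / (b - a)"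
        by (rule ab_bounds(1)[OF ab L1 degr bM])
      have eq: "64/7 * real L ^ 2 * M / (b - a) = 32/7 * K0 * M" by (simp add: K0_def)
      show ?thesis
      proof (intro ballI impI)
        fix y assume "y \<in> {a..b}"
        then have "\<bar>poly (pderiv r) y\<bar> \<le> 64/7 * real L ^ 2 * M / (b - a)" using mk by blast
        then show "\<bar>poly (pderiv r) y\<bar> \<le> 32/7 * K0 * M" unfolding eq .
      qed
    qed
    have "sqrt (\<delta> / (16 * K0)) \<le> \<bar>x\<bar>"
      by (rule core[OF a b K0 dpos _ gam r0 rb assms(11) gx dB]) (use d1 iK0 in simp)
    moreover have "\<delta> / (16 * K0) = \<delta> * ((b - a) / (32 * real L ^ 2))"
      using iK0 by (metis times_divide_eq_right mult.right_neutral)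
    ultimately show ?thesis by simp
  qed
  have conj2: "\<bar>x\<bar> \<ge> sqrt (\<delta> * (sqrt \<bar>a * b\<bar> / (16 * real L)))"
    if d2: "\<delta> < sqrt \<bar>a * b\<bar> / (16 * real L)"
  proof -
    define A where "A = - a"
    have A: "A > 0" using a by (simp add: A_def)
    define s where "s = sqrt \<bar>a * b\<bar>"
    have abA: "\<bar>a * b\<bar> = A * b" using a b by (simp add: A_def abs_mult)
    have s: "s > 0" using a b by (simp add: s_def)
    have s2: "s^2 = A * b" using abA by (simp add: s_def)
    define K0 where "K0 = real L / s"
    have K0: "K0 > 0" using s Lr by (simp add: K0_def)
    have iK0: "1 / (16 * K0) = s / (16 * real L)" using s Lr by (simp add: K0_def)
    have dB: "\<forall>y\<in>{a..b}. \<bar>y\<bar> \<le> 7 / (32 * K0) \<longrightarrow> \<bar>poly (pderiv r) y\<bar> \<le> 32/7 * K0 * M"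
      if bM: "\<forall>y\<in>{a..b}. \<bar>poly r y\<bar> \<le> M" for M
    proof (intro ballI impI)
      fix y assume y: "y \<in> {a..b}" and yc: "\<bar>y\<bar> \<le> 7 / (32 * K0)"
      have M0: "M \<ge> 0" using bM a b by (metis abs_ge_zero atLeastAtMost_iff less_imp_le order_trans)
      show "\<bar>poly (pderiv r) y\<bar> \<le> 32/7 * K0 * M"
      proof (cases "2 * real L * s \<le> b - a")
        case True
        have mk: "\<bar>poly (pderiv r) y\<bar> \<le> 64/7 * real L ^ 2 * M / (b - a)"
          using ab_bounds(1)[OF ab L1 degr bM] y by blast
        have "64/7 * real L ^ 2 * M / (b - a) \<le> 32/7 * K0 * M"
        proof -
          have "(2 * real L * s) * (real L * M) \<le> (b - a) * (real L * M)"
            using True M0 Lr by (intro mult_right_mono) auto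
          then show ?thesis using ab s by (simp add: K0_def field_simps power2_eq_square)
        qed
        then show ?thesis using mk by linarith
      next
        case False
        then have bma: "b - a < 2 * real L * s" by simp
        have bs: "b < 2 * real L * s" and As: "A < 2 * real L * s" using bma a b by (auto simp: A_def)
        have sA: "s < 2 * real L * A"
        proof -
          have "s * s < (2 * real L * s) * A" using bs A s2 by (simp add: power2_eq_square mult.commute)
          then have "s * s < (2 * real L * A) * s" by (simp add: algebra_simps)
          then show ?thesis using s by simp
        qed
        have sb: "s < 2 * real L * b"
        proof -
          have "s * s < (2 * real L * s) * b" using As b s2 by (simp add: power2_eq_square)
          then have "s * s < (2 * real L * b) * s" by (simp add: algebra_simps)
          then show ?thesis using s by simp
        qed
        have yc': "\<bar>y\<bar> \<le> 7 * s / (32 * real L)" using yc s Lr by (simp add: K0_def)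
        have "7 * s / (32 * real L) < 7 / 16 * A" using sA Lr by (simp add: field_simps)
        then have ya: "y - a \<ge> 9/16 * A" using yc' by (simp add: A_def abs_le_iff)
        have "7 * s / (32 * real L) < 7 / 16 * b" using sb Lr by (simp add: field_simps)
        then have yb: "b - y \<ge> 9/16 * b" using yc' by (simp add: abs_le_iff)
        have "(9/16 * A) * (9/16 * b) \<le> (y - a) * (b - y)"
          by (rule mult_mono) (use ya yb A b in auto)
        then have "(9/16 * s)^2 \<le> (y - a) * (b - y)" using s2 by (simp add: power2_eq_square algebra_simps)
        then have sq: "9/16 * s \<le> sqrt ((y - a) * (b - y))" by (rule real_le_rsqrt)
        have be: "\<bar>poly (pderiv r) y\<bar> * sqrt ((y - a) * (b - y)) \<le> real L * M"
          using ab_bounds(2)[OF ab L1 degr bM] y by blast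
        have "\<bar>poly (pderiv r) y\<bar> * (9/16 * s) \<le> \<bar>poly (pderiv r) y\<bar> * sqrt ((y - a) * (b - y))"
          by (rule mult_left_mono[OF sq]) simp
        then have "\<bar>poly (pderiv r) y\<bar> * (9/16 * s) \<le> real L * M" using be by linarith
        then have "\<bar>poly (pderiv r) y\<bar> \<le> real L * M / (9/16 * s)" using s by (simp add: le_divide_eq)
        also have "\<dots> \<le> 32/7 * K0 * M" using s M0 Lr by (simp add: K0_def field_simps)
        finally show ?thesis .
      qed
    qed
    have "sqrt (\<delta> / (16 * K0)) \<le> \<bar>x\<bar>"
      by (rule core[OF a b K0 dpos _ gam r0 rb assms(11) gx dB]) (use d2 iK0 in \<open>simp add: s_def\<close>)
    moreover have "\<delta> / (16 * K0) = \<delta> * (sqrt \<bar>a * b\<bar> / (16 * real L))"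
      using iK0 by (simp add: s_def) (metis times_divide_eq_right mult.right_neutral)
    ultimately show ?thesis by simp
  qed
  show ?thesis using conj1 conj2 by blast
qed

end
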